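(* Let $(\Phi,D)$ and $(\Psi,E)$ be domain-free continuous information algebras, let $f,g\in[\Phi\rightarrow\Psi]_c$ and $(x,y)\in D\times E$. Then $f\otimes g\in[\Phi\rightarrow\Psi]_c$. Moreover, if $(\Phi,D)$ and $(\Psi,E)$ are s-continuous, then $f^{\Rightarrow(x,y)}\in[\Phi\rightarrow\Psi]_c$.
   Context: A domain-free information algebra $(\Phi,D)$ consists of a set $\Phi$, a lattice $D$, a combination $\otimes$ and a focusing $(\psi,x)\mapsto\psi^{\Rightarrow x}$ ($x\in D$) such that: $\otimes$ is associative, commutative with neutral element $e$; $(\psi^{\Rightarrow y})^{\Rightarrow x}=\psi^{\Rightarrow x\wedge y}$; $(\phi^{\Rightarrow x}\otimes\psi)^{\Rightarrow x}=\phi^{\Rightarrow x}\otimes\psi^{\Rightarrow x}$; every $\psi$ has some $x$ with $\psi^{\Rightarrow x}=\psi$; $\psi\otimes\psi^{\Rightarrow x}=\psi$. Order: $\psi\le\phi$ iff $\psi\otimes\phi=\phi$; suprema refer to this order. $a\ll b$ means: for every directed $X$ with $b\le\vee X$ there is $c\in X$ with $a\le c$. $(\Phi,D)$, with $D$ having a top element, is continuous (resp. s-continuous) if there exists $\Gamma\subseteq\Phi$, closed under combination and containing $e$, such that every directed subset of $\Gamma$ has a supremum in $\Phi$ and $\phi=\vee\{\psi\in\Gamma:\psi\ll\phi\}$ for all $\phi$ (resp. $\phi^{\Rightarrow x}=\vee\{\psi\in\Gamma:\psi=\psi^{\Rightarrow x}\ll\phi\}$ for all $\phi,x$). For continuous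 $(\Phi,D)$, $(\Psi,E)$, $[\Phi\rightarrow\Psi]_c$ is the set of maps $f:\Phi\to\Psi$ with $f(\vee X)=\vee f(X)$ for every directed $X\subseteq\Phi$. For $f,g\in[\Phi\rightarrow\Psi]_c$ and $(x,y)\in D\times E$ define $(f\otimes g)(\phi)=f(\phi)\otimes g(\phi)$ and $f^{\Rightarrow(x,y)}(\phi)=(f(\phi^{\Rightarrow x}))^{\Rightarrow y}$. *)

theory Defs
  imports Main
begin

text \<open>A domain-free information algebra (Phi, D) is represented by a carrier type 'a
  (the set Phi), a lattice type 'd (the lattice D), a combination comb, a neutral element e
  and a focusing foc psi x (written psi^{=> x} in the paper).\<close>

definition info_alg :: "('a \<Rightarrow> 'a \<Rightarrow> 'a) \<Rightarrow> 'a \<Rightarrow> ('a \<Rightarrow> 'd::lattice \<Rightarrow> 'a) \<Rightarrow> bool" where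
  "info_alg comb e foc \<longleftrightarrow>
     (\<forall>a b c. comb (comb a b) c = comb a (comb b c)) \<and>
     (\<forall>a b. comb a b = comb b a) \<and>
     (\<forall>a. comb e a = a \<and> comb a e = a) \<and>
     (\<forall>\<psi> x y. foc (foc \<psi> y) x = foc \<psi> (inf x y)) \<and>
     (\<forall>\<phi> \<psi> x. foc (comb (foc \<phi> x) \<psi>) x = comb (foc \<phi> x) (foc \<psi> x)) \<and>
     (\<forall>\<psi>. \<exists>x. foc \<psi> x = \<psi>) \<and>
     (\<forall>\<psi> x. comb \<psi> (foc \<psi> x) = \<psi>)"

definition ia_le :: "('a \<Rightarrow> 'a \<Rightarrow> 'a) \<Rightarrow> 'a \<Rightarrow> 'a \<Rightarrow> bool" where
  "ia_le comb \<psi> \<phi> \<longleftrightarrow> comb \<psi> \<phi> = \<phi>"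

definition ia_is_sup :: "('a \<Rightarrow> 'a \<Rightarrow> 'a) \<Rightarrow> 'a set \<Rightarrow> 'a \<Rightarrow> bool" where
  "ia_is_sup comb X s \<longleftrightarrow> (\<forall>a\<in>X. ia_le comb a s) \<and>
     (\<forall>u. (\<forall>a\<in>X. ia_le comb a u) \<longrightarrow> ia_le comb s u)"

definition ia_has_sup :: "('a \<Rightarrow> 'a \<Rightarrow> 'a) \<Rightarrow> 'a set \<Rightarrow> bool" where
  "ia_has_sup comb X \<longleftrightarrow> (\<exists>s. ia_is_sup comb X s)"

definition ia_Sup :: "('a \<Rightarrow> 'a \<Rightarrow> 'a) \<Rightarrow> 'a set \<Rightarrow> 'a" where
  "ia_Sup comb X = (THE s. ia_is_sup comb X s)"

definition ia_directed :: "('a \<Rightarrow> 'a \<Rightarrow> 'a) \<Rightarrow> 'a set \<Rightarrow> bool" where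
  "ia_directed comb X \<longleftrightarrow> X \<noteq> {} \<and>
     (\<forall>a\<in>X. \<forall>b\<in>X. \<exists>c\<in>X. ia_le comb a c \<and> ia_le comb b c)"

definition ia_way_below :: "('a \<Rightarrow> 'a \<Rightarrow> 'a) \<Rightarrow> 'a \<Rightarrow> 'a \<Rightarrow> bool" where
  "ia_way_below comb a b \<longleftrightarrow>
     (\<forall>X. ia_directed comb X \<and> ia_has_sup comb X \<and> ia_le comb b (ia_Sup comb X)
          \<longrightarrow> (\<exists>c\<in>X. ia_le comb a c))"

definition ia_continuous :: "('a \<Rightarrow> 'a \<Rightarrow> 'a) \<Rightarrow> 'a \<Rightarrow> ('a \<Rightarrow> 'd::lattice \<Rightarrow> 'a) \<Rightarrow> bool" where
  "ia_continuous comb e foc \<longleftrightarrow>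
     (\<exists>t::'d. \<forall>x. x \<le> t) \<and>
     (\<exists>\<Gamma>. (\<forall>a\<in>\<Gamma>. \<forall>b\<in>\<Gamma>. comb a b \<in> \<Gamma>) \<and> e \<in> \<Gamma> \<and>
          (\<forall>X. X \<subseteq> \<Gamma> \<and> ia_directed comb X \<longrightarrow> ia_has_sup comb X) \<and>
          (\<forall>\<phi>. ia_is_sup comb {\<psi>\<in>\<Gamma>. ia_way_below comb \<psi> \<phi>} \<phi>))"

definition ia_s_continuous :: "('a \<Rightarrow> 'a \<Rightarrow> 'a) \<Rightarrow> 'a \<Rightarrow> ('a \<Rightarrow> 'd::lattice \<Rightarrow> 'a) \<Rightarrow> bool" where
  "ia_s_continuous comb e foc \<longleftrightarrow>
     (\<exists>t::'d. \<forall>x. x \<le> t) \<and>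
     (\<exists>\<Gamma>. (\<forall>a\<in>\<Gamma>. \<forall>b\<in>\<Gamma>. comb a b \<in> \<Gamma>) \<and> e \<in> \<Gamma> \<and>
          (\<forall>X. X \<subseteq> \<Gamma> \<and> ia_directed comb X \<longrightarrow> ia_has_sup comb X) \<and>
          (\<forall>\<phi> x. ia_is_sup comb {\<psi>\<in>\<Gamma>. foc \<psi> x = \<psi> \<and> ia_way_below comb \<psi> \<phi>} (foc \<phi> x)))"

text \<open>Membership in [Phi -> Psi]_c: f preserves suprema of directed sets
  (whenever the directed set X has a supremum in Phi, f(X) has supremum f(sup X) in Psi).\<close>
definition ia_cont_map :: "('a \<Rightarrow> 'a \<Rightarrow> 'a) \<Rightarrow> ('b \<Rightarrow> 'b \<Rightarrow> 'b) \<Rightarrow> ('a \<Rightarrow> 'b) \<Rightarrow> bool" where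
  "ia_cont_map combA combB f \<longleftrightarrow>
     (\<forall>X. ia_directed combA X \<and> ia_has_sup combA X \<longrightarrow>
          ia_is_sup combB (f ` X) (f (ia_Sup combA X)))"

end

theory Submission
  imports Defs
begin

lemma ia_idem: "info_alg comb e foc \<Longrightarrow> comb a a = a"
  unfolding info_alg_def by metis

lemma ia_refl: "info_alg comb e foc \<Longrightarrow> ia_le comb a a"
  using ia_idem unfolding ia_le_def by metis

lemma ia_trans: "info_alg comb e foc \<Longrightarrow> ia_le comb a b \<Longrightarrow> ia_le comb b c \<Longrightarrow> ia_le comb a c"
  unfolding ia_le_def info_alg_def by metis

lemma ia_antisym: "info_alg comb e foc \<Longrightarrow> ia_le comb a b \<Longrightarrow> ia_le comb b a \<Longrightarrow> a = b"
  unfolding ia_le_def info_alg_def by metis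

lemma ia_le_left: "info_alg comb e foc \<Longrightarrow> ia_le comb a (comb a b)"
proof -
  assume A: "info_alg comb e foc"
  have "comb a (comb a b) = comb (comb a a) b" using A unfolding info_alg_def by metis
  then show ?thesis using ia_idem[OF A] unfolding ia_le_def by simp
qed

lemma ia_le_right: "info_alg comb e foc \<Longrightarrow> ia_le comb b (comb a b)"
  using ia_le_left[of comb e foc b a] unfolding info_alg_def by metis

lemma ia_comb_mono: "info_alg comb e foc \<Longrightarrow> ia_le comb a b \<Longrightarrow> ia_le comb c d \<Longrightarrow> ia_le comb (comb a c) (comb b d)"
proof -
  assume A: "info_alg comb e foc" and ab: "ia_le comb a b" and cd: "ia_le comb c d"
  have as: "\<And>a b c. comb (comb a b) c = comb a (comb b c)" and cm: "\<And>a b. comb a b = comb b a"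
    using A unfolding info_alg_def by auto
  have "comb (comb a c) (comb b d) = comb (comb a b) (comb c d)"
    by (metis as cm)
  then show ?thesis using ab cd unfolding ia_le_def by simp
qed

lemma ia_lub: "info_alg comb e foc \<Longrightarrow> ia_le comb a u \<Longrightarrow> ia_le comb b u \<Longrightarrow> ia_le comb (comb a b) u"
  using ia_comb_mono[of comb e foc a u b u] ia_idem[of comb e foc u] by simp

lemma ia_foc_mono: "info_alg comb e foc \<Longrightarrow> ia_le comb a b \<Longrightarrow> ia_le comb (foc a x) (foc b x)"
proof -
  assume A: "info_alg comb e foc" and ab: "ia_le comb a b"
  have as: "\<And>a b c. comb (comb a b) c = comb a (comb b c)" and cm: "\<And>a b. comb a b = comb b a"
    and ax: "\<And>\<phi> \<psi> x. foc (comb (foc \<phi> x) \<psi>) x = comb (foc \<phi> x) (foc \<psi> x)"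
    and ab2: "\<And>\<psi> x. comb \<psi> (foc \<psi> x) = \<psi>"
    using A unfolding info_alg_def by auto
  have "comb (foc a x) (comb a b) = comb a b" by (metis as cm ab2)
  then have "foc (comb a b) x = comb (foc a x) (foc (comb a b) x)" by (metis ax)
  then show ?thesis using ab unfolding ia_le_def by simp
qed

lemma ia_Sup_eq: "info_alg comb e foc \<Longrightarrow> ia_is_sup comb X s \<Longrightarrow> ia_Sup comb X = s"
  unfolding ia_Sup_def
  by (rule the_equality) (auto simp: ia_is_sup_def intro: ia_antisym)

lemma cont_map_mono:
  assumes A: "info_alg cA eA fA" and C: "ia_cont_map cA cB f" and ab: "ia_le cA a b"
  shows "ia_le cB (f a) (f b)"
proof -
  have d: "ia_directed cA {a, b}" unfolding ia_directed_def
    using ab ia_refl[OF A] by auto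
  have s: "ia_is_sup cA {a,b} b" unfolding ia_is_sup_def using ab ia_refl[OF A] by auto
  then have "ia_has_sup cA {a,b}" unfolding ia_has_sup_def by blast
  with C d have "ia_is_sup cB (f ` {a,b}) (f (ia_Sup cA {a,b}))" unfolding ia_cont_map_def by blast
  then show ?thesis using ia_Sup_eq[OF A s] unfolding ia_is_sup_def by auto
qed

lemma directed_image:
  assumes d: "ia_directed cA X" and m: "\<And>a b. ia_le cA a b \<Longrightarrow> ia_le cB (h a) (h b)"
  shows "ia_directed cB (h ` X)"
  using d m unfolding ia_directed_def by (auto, metis)

lemma foc_sup:
  assumes A: "info_alg comb e foc" and S: "ia_s_continuous comb e foc"
    and d: "ia_directed comb X" and s: "ia_is_sup comb X t"
  shows "ia_is_sup comb ((\<lambda>a. foc a x) ` X) (foc t x)"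
proof -
  obtain \<Gamma> where G: "\<And>\<phi> x. ia_is_sup comb {\<psi>\<in>\<Gamma>. foc \<psi> x = \<psi> \<and> ia_way_below comb \<psi> \<phi>} (foc \<phi> x)"
  proof -
    from S obtain \<Gamma> where "\<forall>\<phi> x. ia_is_sup comb {\<psi>\<in>\<Gamma>. foc \<psi> x = \<psi> \<and> ia_way_below comb \<psi> \<phi>} (foc \<phi> x)"
      unfolding ia_s_continuous_def by (elim conjE exE) 
    then show ?thesis using that by blast
  qed
  have hs: "ia_has_sup comb X" using s unfolding ia_has_sup_def by blast
  have st: "ia_Sup comb X = t" using ia_Sup_eq[OF A s] .
  have ub: "\<forall>b\<in>(\<lambda>a. foc a x) ` X. ia_le comb b (foc t x)"
    using s ia_foc_mono[OF A] unfolding ia_is_sup_def by auto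
  have least: "ia_le comb (foc t x) u" if u: "\<forall>b\<in>(\<lambda>a. foc a x) ` X. ia_le comb b u" for u
  proof -
    have "\<forall>\<psi>\<in>{\<psi>\<in>\<Gamma>. foc \<psi> x = \<psi> \<and> ia_way_below comb \<psi> t}. ia_le comb \<psi> u"
    proof
      fix \<psi> assume "\<psi> \<in> {\<psi>\<in>\<Gamma>. foc \<psi> x = \<psi> \<and> ia_way_below comb \<psi> t}"
      then have fx: "foc \<psi> x = \<psi>" and wb: "ia_way_below comb \<psi> t" by auto
      from wb d hs st ia_refl[OF A, of t] obtain c where c: "c \<in> X" "ia_le comb \<psi> c"
        unfolding ia_way_below_def by auto
      have "ia_le comb (foc \<psi> x) (foc c x)" using ia_foc_mono[OF A c(2)] .
      then have "ia_le comb \<psi> (foc c x)" using fx by simp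
      moreover have "ia_le comb (foc c x) u" using u c(1) by auto
      ultimately show "ia_le comb \<psi> u" using ia_trans[OF A] by blast
    qed
    then show ?thesis using G[of x t] unfolding ia_is_sup_def by blast
  qed
  show ?thesis unfolding ia_is_sup_def using ub least by blast
qed

theorem proposition3p12:
  fixes combP :: "'a \<Rightarrow> 'a \<Rightarrow> 'a" and eP :: 'a and focP :: "'a \<Rightarrow> 'd::lattice \<Rightarrow> 'a"
    and combQ :: "'b \<Rightarrow> 'b \<Rightarrow> 'b" and eQ :: 'b and focQ :: "'b \<Rightarrow> 'e::lattice \<Rightarrow> 'b"
    and f g :: "'a \<Rightarrow> 'b" and x :: 'd and y :: 'e
  assumes "info_alg combP eP focP" and "info_alg combQ eQ focQ"
    and "ia_continuous combP eP focP" and "ia_continuous combQ eQ focQ"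
    and "ia_cont_map combP combQ f" and "ia_cont_map combP combQ g"
  shows "ia_cont_map combP combQ (\<lambda>\<phi>. combQ (f \<phi>) (g \<phi>)) \<and>
         (ia_s_continuous combP eP focP \<and> ia_s_continuous combQ eQ focQ \<longrightarrow>
            ia_cont_map combP combQ (\<lambda>\<phi>. focQ (f (focP \<phi> x)) y))"
proof
  note AP = assms(1) and AQ = assms(2)
  show "ia_cont_map combP combQ (\<lambda>\<phi>. combQ (f \<phi>) (g \<phi>))"
    unfolding ia_cont_map_def
  proof (intro allI impI)
    fix X assume H: "ia_directed combP X \<and> ia_has_sup combP X"
    let ?s = "ia_Sup combP X"
    have sf: "ia_is_sup combQ (f ` X) (f ?s)" and sg: "ia_is_sup combQ (g ` X) (g ?s)"
      using H assms(5,6) unfolding ia_cont_map_def by auto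
    show "ia_is_sup combQ ((\<lambda>\<phi>. combQ (f \<phi>) (g \<phi>)) ` X) (combQ (f ?s) (g ?s))"
      unfolding ia_is_sup_def
    proof (intro conjI ballI allI impI)
      fix b assume "b \<in> (\<lambda>\<phi>. combQ (f \<phi>) (g \<phi>)) ` X"
      then obtain a where a: "a \<in> X" "b = combQ (f a) (g a)" by auto
      show "ia_le combQ b (combQ (f ?s) (g ?s))"
        using a sf sg ia_comb_mono[OF AQ] unfolding ia_is_sup_def by auto
    next
      fix u assume u: "\<forall>b\<in>(\<lambda>\<phi>. combQ (f \<phi>) (g \<phi>)) ` X. ia_le combQ b u"
      have "\<forall>b\<in>f ` X. ia_le combQ b u"
        using u ia_le_left[OF AQ] ia_trans[OF AQ] by blast
      then have 1: "ia_le combQ (f ?s) u" using sf unfolding ia_is_sup_def by blast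
      have "\<forall>b\<in>g ` X. ia_le combQ b u"
        using u ia_le_right[OF AQ] ia_trans[OF AQ] by blast
      then have 2: "ia_le combQ (g ?s) u" using sg unfolding ia_is_sup_def by blast
      show "ia_le combQ (combQ (f ?s) (g ?s)) u" using ia_lub[OF AQ 1 2] .
    qed
  qed
next
  note AP = assms(1) and AQ = assms(2)
  show "ia_s_continuous combP eP focP \<and> ia_s_continuous combQ eQ focQ \<longrightarrow>
            ia_cont_map combP combQ (\<lambda>\<phi>. focQ (f (focP \<phi> x)) y)"
  proof
    assume S: "ia_s_continuous combP eP focP \<and> ia_s_continuous combQ eQ focQ"
    show "ia_cont_map combP combQ (\<lambda>\<phi>. focQ (f (focP \<phi> x)) y)"
      unfolding ia_cont_map_def
    proof (intro allI impI)
      fix X assume H: "ia_directed combP X \<and> ia_has_sup combP X"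
      let ?s = "ia_Sup combP X"
      have s: "ia_is_sup combP X ?s" using H unfolding ia_has_sup_def
        using ia_Sup_eq[OF AP] by metis
      let ?Y = "(\<lambda>a. focP a x) ` X"
      have s1: "ia_is_sup combP ?Y (focP ?s x)"
        using foc_sup[OF AP _ _ s] S H by blast
      have d1: "ia_directed combP ?Y"
        using directed_image[of combP X combP "\<lambda>a. focP a x"] H ia_foc_mono[OF AP] by blast
      have e1: "ia_Sup combP ?Y = focP ?s x" using ia_Sup_eq[OF AP s1] .
      have s2: "ia_is_sup combQ (f ` ?Y) (f (focP ?s x))"
        using assms(5) d1 s1 e1 unfolding ia_cont_map_def ia_has_sup_def by metis
      have d2: "ia_directed combQ (f ` ?Y)"
        using directed_image[OF d1, of combQ f] cont_map_mono[OF AP assms(5)] by blast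
      have s3: "ia_is_sup combQ ((\<lambda>b. focQ b y) ` (f ` ?Y)) (focQ (f (focP ?s x)) y)"
        using foc_sup[OF AQ _ d2 s2] S by blast
      moreover have "(\<lambda>b. focQ b y) ` (f ` ?Y) = (\<lambda>\<phi>. focQ (f (focP \<phi> x)) y) ` X"
        by (simp add: image_image)
      ultimately show "ia_is_sup combQ ((\<lambda>\<phi>. focQ (f (focP \<phi> x)) y) ` X)
          (focQ (f (focP ?s x)) y)" by simp
    qed
  qed
qed

end
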